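(* For every $n\ge 3$, $\chi'_{qm\Sigma}(K_n)=3$.
   Context: A $k$-edge-coloring of $G$ is any map $c:E(G)\to\{1,\dots,k\}$ (adjacent edges may share colors). It induces $\sigma_c(v)=\sum_{u\in N(v)}c(vu)$. The coloring is neighbor sum distinguishing (NSD) if $\sigma_c(u)\ne\sigma_c(v)$ for every edge $uv$. It is quasi-majority if every vertex $v$ is incident to at most $\lceil d(v)/2\rceil$ edges of each single color. $\chi'_{qm\Sigma}(G)$ denotes the least $k$ such that $G$ has a $k$-edge-coloring that is both quasi-majority and NSD. *)

theory Defs
  imports Main
begin

text \<open>A simple graph is represented by its edge set E, a set of 2-element vertex sets.\<close>

definition is_k_edge_coloring :: "nat \<Rightarrow> 'a set set \<Rightarrow> ('a set \<Rightarrow> nat) \<Rightarrow> bool" where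
  "is_k_edge_coloring k E c \<longleftrightarrow> (\<forall>e\<in>E. c e \<in> {1..k})"

definition incident_edges :: "'a set set \<Rightarrow> 'a \<Rightarrow> 'a set set" where
  "incident_edges E v = {e\<in>E. v \<in> e}"

definition degree :: "'a set set \<Rightarrow> 'a \<Rightarrow> nat" where
  "degree E v = card (incident_edges E v)"

definition sigma :: "'a set set \<Rightarrow> ('a set \<Rightarrow> nat) \<Rightarrow> 'a \<Rightarrow> nat" where
  "sigma E c v = (\<Sum>e\<in>incident_edges E v. c e)"

definition nsd :: "'a set set \<Rightarrow> ('a set \<Rightarrow> nat) \<Rightarrow> bool" where
  "nsd E c \<longleftrightarrow> (\<forall>u v. {u, v} \<in> E \<longrightarrow> sigma E c u \<noteq> sigma E c v)"

definition quasi_majority :: "'a set set \<Rightarrow> ('a set \<Rightarrow> nat) \<Rightarrow> bool" where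
  "quasi_majority E c \<longleftrightarrow>
     (\<forall>v i. card {e \<in> incident_edges E v. c e = i} \<le> (degree E v + 1) div 2)"

definition chi_qm_sigma :: "'a set set \<Rightarrow> nat" where
  "chi_qm_sigma E = (LEAST k. \<exists>c. is_k_edge_coloring k E c \<and> quasi_majority E c \<and> nsd E c)"

definition complete_graph :: "nat \<Rightarrow> nat set set" where
  "complete_graph n = {{u, v} | u v. u < n \<and> v < n \<and> u \<noteq> v}"

end

theory Submission
  imports Defs
begin


definition col :: "nat \<Rightarrow> nat \<Rightarrow> nat" where
  "col m k = (if even k then 2 else if k < m then 1 else 3)"

lemma sum_split_add: "(\<Sum>k<a+(b::nat). f k) = (\<Sum>k<a. f k) + (\<Sum>j<b. f (a+j))"
  by (induction b) (auto simp: add.assoc)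

lemma window:
  fixes f :: "nat \<Rightarrow> nat"
  assumes "v < m"
  shows "(\<Sum>j\<in>{..<m}-{v}. f (v+j)) + f (2*v) = (\<Sum>k<v+m. f k) - (\<Sum>k<v. f k)"
proof -
  have "(\<Sum>j<m. f (v+j)) = f (v+v) + (\<Sum>j\<in>{..<m}-{v}. f (v+j))"
    using assms by (subst sum.remove[of _ v]) auto
  moreover have "(\<Sum>k<v+m. f k) = (\<Sum>k<v. f k) + (\<Sum>j<m. f (v+j))"
    by (rule sum_split_add)
  ultimately show ?thesis by (simp add: mult_2)
qed

lemma S_low: "m = 2*h+1 \<Longrightarrow> a \<le> m \<Longrightarrow> (\<Sum>k<a. col m k) = 3*(a div 2) + 2*(a mod 2)"
proof (induction a)
  case 0 then show ?case by simp
next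
  case (Suc a)
  then have "(\<Sum>k<Suc a. col m k) = 3*(a div 2) + 2*(a mod 2) + col m a" by simp
  also have "\<dots> = 3*(Suc a div 2) + 2*(Suc a mod 2)"
    using Suc.prems by (cases "even a") (auto simp: col_def elim!: evenE oddE)
  finally show ?case .
qed

lemma S_high: "m = 2*h+1 \<Longrightarrow> (\<Sum>k<m+r. col m k) = 3*h+2+5*(r div 2)+3*(r mod 2)"
proof (induction r)
  case 0 then show ?case using S_low[of m h m] by simp
next
  case (Suc r)
  then have "(\<Sum>k<m+Suc r. col m k) = 3*h+2+5*(r div 2)+3*(r mod 2) + col m (m+r)" by simp
  also have "\<dots> = 3*h+2+5*(Suc r div 2)+3*(Suc r mod 2)"
    using Suc.prems by (cases "even r") (auto simp: col_def elim!: evenE oddE)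
  finally show ?case .
qed

lemma row_sum:
  assumes "m = 2*h+1" "v < m"
  shows "(\<Sum>j\<in>{..<m}-{v}. col m (v+j)) = 3*h+v"
proof -
  have w: "(\<Sum>j\<in>{..<m}-{v}. col m (v+j)) + col m (2*v) = (\<Sum>k<m+v. col m k) - (\<Sum>k<v. col m k)"
    using window[OF assms(2), of "col m"] by (simp add: add.commute)
  have "col m (2*v) = 2" by (simp add: col_def)
  moreover note S_high[OF assms(1), of v] S_low[OF assms(1), of v]
  ultimately show ?thesis using w assms by simp
qed

definition ind :: "nat \<Rightarrow> nat \<Rightarrow> nat \<Rightarrow> nat" where
  "ind m x k = (if col m k = x then 1 else 0)"

lemma P1: "m = 2*h+1 \<Longrightarrow> (\<Sum>k<a. ind m 1 k) = (min a m) div 2"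
proof (induction a)
  case 0 then show ?case by simp
next
  case (Suc a)
  then show ?case by (cases "even a") (auto simp: ind_def col_def min_def elim!: evenE oddE)
qed

lemma P2: "(\<Sum>k<a. ind m 2 k) = (a+1) div 2"
proof (induction a)
  case 0 then show ?case by simp
next
  case (Suc a)
  then show ?case by (cases "even a") (auto simp: ind_def col_def elim!: evenE oddE)
qed

lemma P3: "m = 2*h+1 \<Longrightarrow> (\<Sum>k<a. ind m 3 k) = (a+1-m) div 2"
proof (induction a)
  case 0 then show ?case by simp
next
  case (Suc a)
  then have "(\<Sum>k<Suc a. ind m 3 k) = (a+1-m) div 2 + ind m 3 a" by simp
  also have "\<dots> = (Suc a+1-m) div 2"
    using Suc.prems by (simp add: ind_def col_def) presburger
  finally show ?case .
qed

lemma card_filter_sum: "finite A \<Longrightarrow> card {j\<in>A. P j} = (\<Sum>j\<in>A. if P j then 1 else (0::nat))"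
  by (simp add: sum.If_cases Int_def conj_commute)

lemma row_count:
  assumes m: "m = 2*h+1" and v: "v < m"
  shows "card {j\<in>{..<m}-{v}. col m (v+j) = x} \<le> h"
proof -
  have c: "card {j\<in>{..<m}-{v}. col m (v+j) = x} = (\<Sum>j\<in>{..<m}-{v}. ind m x (v+j))"
    by (subst card_filter_sum) (auto simp: ind_def)
  have w: "(\<Sum>j\<in>{..<m}-{v}. ind m x (v+j)) + ind m x (2*v) = (\<Sum>k<v+m. ind m x k) - (\<Sum>k<v. ind m x k)"
    by (rule window[OF v])
  consider "x = 1" | "x = 2" | "x = 3" | "x \<noteq> 1 \<and> x \<noteq> 2 \<and> x \<noteq> 3" by blast
  then show ?thesis
  proof cases
    case 1
    then show ?thesis using w c P1[OF m, of "v+m"] P1[OF m, of v] v m by simp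
  next
    case 2
    have "ind m x (2*v) = 1" using 2 by (simp add: ind_def col_def)
    then show ?thesis using 2 w c P2[of m "v+m"] P2[of m v] v m by simp
  next
    case 3
    then show ?thesis using w c P3[OF m, of "v+m"] P3[OF m, of v] v m by simp
  next
    case 4
    then have z: "\<And>k. ind m x k = 0" by (auto simp: ind_def col_def)
    show ?thesis unfolding c z by simp
  qed
qed

lemma edge_cg: "{u,v} \<in> complete_graph n \<Longrightarrow> u < n \<and> v < n \<and> u \<noteq> v"
  unfolding complete_graph_def by (auto simp: doubleton_eq_iff)

lemma inc_cg: "v < n \<Longrightarrow> incident_edges (complete_graph n) v = (\<lambda>j. {v,j}) ` ({..<n}-{v})"
  unfolding incident_edges_def complete_graph_def by auto

lemma inc_cg_out: "\<not> v < n \<Longrightarrow> incident_edges (complete_graph n) v = {}"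
  unfolding incident_edges_def complete_graph_def by auto

lemma inj_dbl: "inj_on (\<lambda>j. {v,j}) A"
  by (auto simp: inj_on_def doubleton_eq_iff)

lemma sigma_cg: "v < n \<Longrightarrow> sigma (complete_graph n) c v = (\<Sum>j\<in>{..<n}-{v}. c {v,j})"
  unfolding sigma_def by (simp add: inc_cg sum.reindex[OF inj_dbl])

lemma cnt_cg: "v < n \<Longrightarrow> card {e\<in>incident_edges (complete_graph n) v. c e = i} = card {j\<in>{..<n}-{v}. c {v,j} = i}"
proof -
  assume v: "v < n"
  have "{e\<in>incident_edges (complete_graph n) v. c e = i} = (\<lambda>j. {v,j}) ` {j\<in>{..<n}-{v}. c {v,j} = i}"
    using v by (auto simp: inc_cg)
  then show ?thesis by (simp add: card_image[OF inj_dbl])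
qed

lemma degree_cg: "v < n \<Longrightarrow> degree (complete_graph n) v = n - 1"
  unfolding degree_def by (simp add: inc_cg card_image[OF inj_dbl])

lemma qm_cg:
  assumes "\<And>v i. v < n \<Longrightarrow> card {j\<in>{..<n}-{v}. c {v,j} = i} \<le> n div 2"
  shows "quasi_majority (complete_graph n) c"
  unfolding quasi_majority_def
proof (intro allI)
  fix v i
  show "card {e \<in> incident_edges (complete_graph n) v. c e = i} \<le> (degree (complete_graph n) v + 1) div 2"
  proof (cases "v < n")
    case True
    then show ?thesis using assms[OF True, of i] by (simp add: cnt_cg degree_cg)
  next
    case False
    then show ?thesis by (simp add: inc_cg_out)
  qed
qed

lemma nsd_cg:
  assumes "\<And>u v. u < n \<Longrightarrow> v < n \<Longrightarrow> u \<noteq> v \<Longrightarrow> (\<Sum>j\<in>{..<n}-{u}. c {u,j}) \<noteq> (\<Sum>j\<in>{..<n}-{v}. c {v,j})"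
  shows "nsd (complete_graph n) c"
  unfolding nsd_def using assms edge_cg sigma_cg by metis

lemma in_cg: "u < n \<Longrightarrow> v < n \<Longrightarrow> u \<noteq> v \<Longrightarrow> {u,v} \<in> complete_graph n"
  unfolding complete_graph_def by blast

lemma lower_row:
  assumes col: "is_k_edge_coloring k (complete_graph n) c" and k: "k \<le> 2"
    and qm: "quasi_majority (complete_graph n) c" and v: "v < n"
  shows "sigma (complete_graph n) c v = (n-1) + card {j\<in>{..<n}-{v}. c {v,j} = 2}
     \<and> n - 1 - n div 2 \<le> card {j\<in>{..<n}-{v}. c {v,j} = 2}
     \<and> card {j\<in>{..<n}-{v}. c {v,j} = 2} \<le> n div 2"
proof -
  let ?A = "{..<n}-{v}"
  have cv: "\<And>j. j \<in> ?A \<Longrightarrow> c {v,j} = 1 \<or> c {v,j} = 2"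
  proof -
    fix j assume "j \<in> ?A"
    then have "{v,j} \<in> complete_graph n" using v by (auto intro: in_cg)
    then have "c {v,j} \<in> {1..k}" using col unfolding is_k_edge_coloring_def by blast
    then show "c {v,j} = 1 \<or> c {v,j} = 2" using k by auto
  qed
  have cardA: "card ?A = n - 1" using v by simp
  have q: "\<And>i. card {j\<in>?A. c {v,j} = i} \<le> n div 2"
  proof -
    fix i
    have "card {e\<in>incident_edges (complete_graph n) v. c e = i} \<le> (degree (complete_graph n) v + 1) div 2"
      using qm unfolding quasi_majority_def by blast
    moreover have "degree (complete_graph n) v + 1 = n" using v by (simp add: degree_cg)
    ultimately show "card {j\<in>?A. c {v,j} = i} \<le> n div 2" using cnt_cg[OF v, of c i] by simp
  qed
  have s: "(\<Sum>j\<in>?A. c {v,j}) = (\<Sum>j\<in>?A. 1 + (if c {v,j} = 2 then 1 else 0))"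
    by (rule sum.cong) (use cv in auto)
  have s2: "(\<Sum>j\<in>?A. (if c {v,j} = 1 then 1 else 0) + (if c {v,j} = 2 then 1 else (0::nat))) = (\<Sum>j\<in>?A. 1)"
    by (rule sum.cong) (use cv in auto)
  have e1: "card {j\<in>?A. c {v,j} = 1} + card {j\<in>?A. c {v,j} = 2} = n - 1"
  proof -
    have f: "finite ?A" by simp
    note a = card_filter_sum[OF f, of "\<lambda>j. c {v,j} = 1"] card_filter_sum[OF f, of "\<lambda>j. c {v,j} = 2"]
    show ?thesis unfolding a using s2 cardA by (simp only: sum.distrib) simp
  qed
  have "sigma (complete_graph n) c v = (n-1) + card {j\<in>?A. c {v,j} = 2}"
  proof -
    have f: "finite ?A" by simp
    note a = card_filter_sum[OF f, of "\<lambda>j. c {v,j} = 2"]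
    show ?thesis unfolding a sigma_cg[OF v] s sum.distrib using cardA by simp
  qed
  then show ?thesis using e1 q[of 1] q[of 2] by linarith
qed

lemma lower:
  assumes n: "n \<ge> 3" and col: "is_k_edge_coloring k (complete_graph n) c" and k: "k \<le> 2"
    and qm: "quasi_majority (complete_graph n) c" and ns: "nsd (complete_graph n) c"
  shows False
proof -
  let ?s = "sigma (complete_graph n) c"
  have r: "\<And>v. v < n \<Longrightarrow> ?s v = n - 1 + (n - 1 - n div 2) \<or> ?s v = n - 1 + (n - 1 - n div 2) + 1"
  proof -
    fix v assume "v < n"
    from lower_row[OF col k qm this] show "?s v = n - 1 + (n - 1 - n div 2) \<or> ?s v = n - 1 + (n - 1 - n div 2) + 1"
      by linarith
  qed
  have d: "\<And>u v. u < n \<Longrightarrow> v < n \<Longrightarrow> u \<noteq> v \<Longrightarrow> ?s u \<noteq> ?s v"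
    using ns in_cg unfolding nsd_def by blast
  have "?s 0 \<noteq> ?s 1" "?s 0 \<noteq> ?s 2" "?s 1 \<noteq> ?s 2" using d n by auto
  moreover have "0 < n" "1 < n" "2 < n" using n by auto
  ultimately show False using r[of 0] r[of 1] r[of 2] by linarith
qed

lemma col_range: "col m k \<in> {1..3}" by (simp add: col_def)

lemma sum_dbl: "v \<noteq> j \<Longrightarrow> \<Sum>{v,j} = v + (j::nat)" by simp

lemma odd_ok:
  assumes n: "n = 2*h+1" "h \<ge> 1"
  shows "\<exists>c. is_k_edge_coloring 3 (complete_graph n) c \<and> quasi_majority (complete_graph n) c \<and> nsd (complete_graph n) c"
proof -
  define c where "c = (\<lambda>e. col n (\<Sum>e))"
  have cv: "\<And>v j. j \<in> {..<n}-{v} \<Longrightarrow> c {v,j} = col n (v+j)"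
    unfolding c_def by (subst sum_dbl) auto
  have "is_k_edge_coloring 3 (complete_graph n) c"
    unfolding is_k_edge_coloring_def c_def using col_range by blast
  moreover have "quasi_majority (complete_graph n) c"
  proof (rule qm_cg)
    fix v i assume v: "v < n"
    have "{j\<in>{..<n}-{v}. c {v,j} = i} = {j\<in>{..<n}-{v}. col n (v+j) = i}"
      by (rule Collect_cong) (use cv in auto)
    then show "card {j\<in>{..<n}-{v}. c {v,j} = i} \<le> n div 2"
      using row_count[OF n(1) v, of i] n by simp
  qed
  moreover have "nsd (complete_graph n) c"
  proof (rule nsd_cg)
    have r: "\<And>v. v < n \<Longrightarrow> (\<Sum>j\<in>{..<n}-{v}. c {v,j}) = 3*h+v"
    proof -
      fix v assume v: "v < n"
      have "(\<Sum>j\<in>{..<n}-{v}. c {v,j}) = (\<Sum>j\<in>{..<n}-{v}. col n (v+j))"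
        by (rule sum.cong) (use cv in auto)
      then show "(\<Sum>j\<in>{..<n}-{v}. c {v,j}) = 3*h+v" using row_sum[OF n(1) v] by simp
    qed
    fix u v assume "u < n" "v < n" "u \<noteq> v"
    then show "(\<Sum>j\<in>{..<n}-{u}. c {u,j}) \<noteq> (\<Sum>j\<in>{..<n}-{v}. c {v,j})" using r by simp
  qed
  ultimately show ?thesis by blast
qed

definition fw :: "nat \<Rightarrow> nat \<Rightarrow> nat" where
  "fw h i = (if i < h then 1 else if i \<le> h+1 then 2 else 3)"

lemma fw_sum: "(\<Sum>j<a. fw h j) = (if a \<le> h then a else if a \<le> h+2 then 2*a - h else 3*a-2*h-2)"
  by (induction a) (auto simp: fw_def)



lemma even_ok:
  assumes n: "n = 2*h+2" "h \<ge> 1"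
  shows "\<exists>c. is_k_edge_coloring 3 (complete_graph n) c \<and> quasi_majority (complete_graph n) c \<and> nsd (complete_graph n) c"
proof -
  define m where "m = 2*h+1"
  have nm: "n = Suc m" using n m_def by simp
  define c where "c = (\<lambda>e. if m \<in> e then fw h (\<Sum>e - m) else col m (\<Sum>e))"
  have cv: "\<And>v j. v < m \<Longrightarrow> j \<in> {..<n}-{v} \<Longrightarrow> c {v,j} = (if j = m then fw h v else col m (v+j))"
  proof -
    fix v j assume v: "v < m" and j: "j \<in> {..<n}-{v}"
    have s: "\<Sum>{v,j} = v+j" using j by (intro sum_dbl) auto
    have "m \<in> {v,j} \<longleftrightarrow> j = m" using v by auto
    then show "c {v,j} = (if j = m then fw h v else col m (v+j))"
      unfolding c_def s by simp
  qed
  have cm: "\<And>j. j \<in> {..<n}-{m} \<Longrightarrow> c {m,j} = fw h j"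
    unfolding c_def by (subst sum_dbl) auto
  have split: "\<And>v. v < m \<Longrightarrow> {..<n}-{v} = insert m ({..<m}-{v})" using nm by auto
  have "is_k_edge_coloring 3 (complete_graph n) c"
  proof -
    have "\<forall>e. c e \<in> {1..3}" by (simp add: c_def fw_def col_def)
    then show ?thesis unfolding is_k_edge_coloring_def by blast
  qed
  moreover have "quasi_majority (complete_graph n) c"
  proof (rule qm_cg)
    fix v i assume v: "v < n"
    show "card {j\<in>{..<n}-{v}. c {v,j} = i} \<le> n div 2"
    proof (cases "v < m")
      case True
      have "{j\<in>{..<n}-{v}. c {v,j} = i} \<subseteq> insert m {j\<in>{..<m}-{v}. col m (v+j) = i}"
      proof
        fix j assume j: "j \<in> {j\<in>{..<n}-{v}. c {v,j} = i}"
        show "j \<in> insert m {j\<in>{..<m}-{v}. col m (v+j) = i}"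
        proof (cases "j = m")
          case False
          then show ?thesis using j cv[OF True, of j] split[OF True] by simp
        qed simp
      qed
      then have "card {j\<in>{..<n}-{v}. c {v,j} = i} \<le> card (insert m {j\<in>{..<m}-{v}. col m (v+j) = i})"
        by (intro card_mono) auto
      also have "\<dots> \<le> card {j\<in>{..<m}-{v}. col m (v+j) = i} + 1"
        by (simp add: card_insert_if)
      also have "\<dots> \<le> h + 1" using row_count[OF m_def True, of i] by simp
      finally show ?thesis using n by simp
    next
      case False
      then have vm: "v = m" using v nm by simp
      have nm2: "{..<n}-{m} = {..<m}" using nm by auto
      have "{j\<in>{..<n}-{m}. c {m,j} = i} = {j\<in>{..<n}-{m}. fw h j = i}"
        by (rule Collect_cong) (use cm in auto)
      then have eq: "{j\<in>{..<n}-{v}. c {v,j} = i} = {j\<in>{..<m}. fw h j = i}"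
        unfolding vm nm2 .
      consider "i = 1" | "i = 2" | "i = 3" | "i \<noteq> 1 \<and> i \<noteq> 2 \<and> i \<noteq> 3" by blast
      then have "card {j\<in>{..<m}. fw h j = i} \<le> h + 1"
      proof cases
        case 1
        then have "{j\<in>{..<m}. fw h j = i} \<subseteq> {..<h}" by (auto simp: fw_def split: if_splits)
        then have "card {j\<in>{..<m}. fw h j = i} \<le> card {..<h}" by (intro card_mono) auto
        then show ?thesis by simp
      next
        case 2
        then have "{j\<in>{..<m}. fw h j = i} \<subseteq> {h, h+1}" by (auto simp: fw_def split: if_splits)
        then have "card {j\<in>{..<m}. fw h j = i} \<le> card {h, h+1}" by (intro card_mono) auto
        then show ?thesis using n by simp
      next
        case 3
        then have "{j\<in>{..<m}. fw h j = i} \<subseteq> {h+2..<m}" by (auto simp: fw_def split: if_splits)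
        then have "card {j\<in>{..<m}. fw h j = i} \<le> card {h+2..<m}" by (intro card_mono) auto
        then show ?thesis using m_def by simp
      next
        case 4
        then have e4: "{j\<in>{..<m}. fw h j = i} = {}" by (auto simp: fw_def)
        show ?thesis unfolding e4 by simp
      qed
      then show ?thesis using eq n by simp
    qed
  qed
  moreover have "nsd (complete_graph n) c"
  proof (rule nsd_cg)
    define R where "R v = (if v < m then 3*h+v+fw h v else 4*h+1)" for v
    have r: "\<And>v. v < n \<Longrightarrow> (\<Sum>j\<in>{..<n}-{v}. c {v,j}) = R v"
    proof -
      fix v assume v: "v < n"
      show "(\<Sum>j\<in>{..<n}-{v}. c {v,j}) = R v"
      proof (cases "v < m")
        case True
        have "(\<Sum>j\<in>{..<n}-{v}. c {v,j}) = (\<Sum>j\<in>{..<n}-{v}. (if j = m then fw h v else col m (v+j)))"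
          by (rule sum.cong) (use cv[OF True] in auto)
        also have "\<dots> = fw h v + (\<Sum>j\<in>{..<m}-{v}. col m (v+j))"
          unfolding split[OF True] by (subst sum.insert) (auto intro!: sum.cong)
        also have "\<dots> = R v" using row_sum[OF m_def True] True by (simp add: R_def)
        finally show ?thesis .
      next
        case False
        then have vm: "v = m" using v nm by simp
        have "(\<Sum>j\<in>{..<n}-{v}. c {v,j}) = (\<Sum>j<m. fw h j)"
          using vm nm cm by (intro sum.cong) auto
        also have "\<dots> = 4*h+1" using fw_sum[of h m] m_def n by simp
        finally show ?thesis using vm by (simp add: R_def)
      qed
    qed
    fix u v assume uv: "u < n" "v < n" "u \<noteq> v"
    have "R u \<noteq> R v"
    proof -
      have mono: "\<And>a b. a < b \<Longrightarrow> b < m \<Longrightarrow> R a < R b"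
        by (auto simp: R_def fw_def)
      have ne: "\<And>a. a < m \<Longrightarrow> R a \<noteq> R m"
        by (auto simp: R_def fw_def m_def)
      have um: "u \<le> m" "v \<le> m" using uv nm by auto
      show ?thesis
      proof (cases "u < v")
        case True
        show ?thesis
        proof (cases "v = m")
          case True
          then show ?thesis using ne[of u] \<open>u < v\<close> by simp
        next
          case False
          then show ?thesis using mono[of u v] \<open>u < v\<close> um by simp
        qed
      next
        case False
        then have "v < u" using uv by simp
        show ?thesis
        proof (cases "u = m")
          case True
          then show ?thesis using ne[of v] \<open>v < u\<close> by simp
        next
          case False
          then show ?thesis using mono[of v u] \<open>v < u\<close> um by simp
        qed
      qed
    qed
    then show "(\<Sum>j\<in>{..<n}-{u}. c {u,j}) \<noteq> (\<Sum>j\<in>{..<n}-{v}. c {v,j})" using r uv by simp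
  qed
  ultimately show ?thesis by blast
qed



theorem mainTheorem4:
  fixes n :: nat
  assumes "n \<ge> 3"
  shows "chi_qm_sigma (complete_graph n) = 3"
  unfolding chi_qm_sigma_def
proof (rule Least_equality)
  show "\<exists>c. is_k_edge_coloring 3 (complete_graph n) c \<and> quasi_majority (complete_graph n) c \<and> nsd (complete_graph n) c"
  proof (cases "even n")
    case True
    then obtain t where t: "n = 2*t" by (elim evenE)
    have "n = 2*(t-1)+2" "t-1 \<ge> 1" using t assms by auto
    then show ?thesis by (rule even_ok)
  next
    case False
    then obtain t where t: "n = 2*t+1" by (elim oddE)
    show ?thesis using odd_ok[of n t] t assms by simp
  qed
next
  fix k assume "\<exists>c. is_k_edge_coloring k (complete_graph n) c \<and> quasi_majority (complete_graph n) c \<and> nsd (complete_graph n) c"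
  then obtain c where "is_k_edge_coloring k (complete_graph n) c" "quasi_majority (complete_graph n) c" "nsd (complete_graph n) c" by blast
  then show "3 \<le> k" using lower[OF assms] by (metis not_less_eq_eq numeral_2_eq_2 numeral_3_eq_3)
qed

end
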